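(* Let $T$ be a compact metric space with a finite Borel measure, $C:T\times T\to\mathbb{R}$ a continuous symmetric positive semidefinite kernel with Mercer expansion $C(s,t)=\sum_j\lambda_j\phi_j(s)\phi_j(t)$ ($\lambda_1\ge\lambda_2\ge\dots>0$, $\{\phi_j\}$ orthonormal in $L^2(T)$), and let $\eta>1$ be such that $\mathrm{tr}(C^{\eta-1})=\sum_j\lambda_j^{\eta-1}<\infty$ and $\kappa^2:=\sup_{x\in T}C^\eta(x,x)<\infty$, where $C^\eta(s,t)=\sum_j\lambda_j^\eta\phi_j(s)\phi_j(t)$. Let $\mathcal{H}_{C^\eta}$ be the RKHS of $C^\eta$ with norm $\|\cdot\|_{C^\eta}$. Data records are $d=(x,y)\in T\times\mathcal{Y}$, and the loss is $L(d,f)=\ell(y,f(x))$ where, for each $y$, $u\mapsto\ell(y,u)$ is convex and $M$-Lipschitz on $\mathbb{R}$ ($M$-admissible loss). For a dataset $D=(d_1,\dots,d_n)$ and $\psi>0$, let $\hat f_D$ be the minimizer over $f\in\mathcal{H}_{C^\eta}$ of $\frac1n\sum_{i=1}^nL(d_i,f)+\psi\|f\|_{C^\eta}^2$. Then $$\sup_{D\sim D'}\|\hat f_D-\hat f_{D'}\|_{1,C}\le\frac{M}{\psi n}\sqrt{\sup_{x}C^\eta(x,x)}\,\sqrt{\mathrm{tr}(C^{\eta-1})}.$$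
   Context: For $h\in L^2(T)$, $h_j=\langle h,\phi_j\rangle_{L^2}$ and $\|h\|_{1,C}=\sum_j|h_j|/\sqrt{\lambda_j}$. Datasets $D\sim D'$ are adjacent if they differ in exactly one record. (The paper's display writes the penalty as $\psi\|f\|_{C^\eta}$; its argument uses the squared norm, as stated here.) *)

theory Defs
  imports "HOL-Analysis.Analysis"
begin

definition psd_kernel :: "('a \<Rightarrow> 'a \<Rightarrow> real) \<Rightarrow> bool" where
  "psd_kernel K \<longleftrightarrow>
     (\<forall>(n::nat) (x::nat \<Rightarrow> 'a) (c::nat \<Rightarrow> real).
        (\<Sum>i<n. \<Sum>j<n. c i * c j * K (x i) (x j)) \<ge> 0)"

definition kernel_pow :: "(nat \<Rightarrow> real) \<Rightarrow> (nat \<Rightarrow> 'a \<Rightarrow> real) \<Rightarrow> real \<Rightarrow> 'a \<Rightarrow> 'a \<Rightarrow> real" where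
  "kernel_pow lam phi e s t = (\<Sum>j. lam j powr e * phi j s * phi j t)"

definition rkhs :: "('a \<Rightarrow> 'a \<Rightarrow> real) \<Rightarrow> ('a \<Rightarrow> real) set
                     \<Rightarrow> (('a \<Rightarrow> real) \<Rightarrow> ('a \<Rightarrow> real) \<Rightarrow> real) \<Rightarrow> bool" where
  "rkhs K H ip \<longleftrightarrow>
     (\<lambda>x. 0) \<in> H \<and>
     (\<forall>f\<in>H. \<forall>g\<in>H. \<forall>a b::real. (\<lambda>x. a * f x + b * g x) \<in> H) \<and>
     (\<forall>f\<in>H. \<forall>g\<in>H. ip f g = ip g f) \<and>
     (\<forall>f\<in>H. \<forall>g\<in>H. \<forall>h\<in>H. \<forall>a b::real.
        ip (\<lambda>x. a * f x + b * g x) h = a * ip f h + b * ip g h) \<and>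
     (\<forall>f\<in>H. 0 \<le> ip f f \<and> (ip f f = 0 \<longrightarrow> f = (\<lambda>x. 0))) \<and>
     (\<forall>s::nat \<Rightarrow> ('a \<Rightarrow> real). (\<forall>n. s n \<in> H) \<and>
        (\<forall>e>0. \<exists>N. \<forall>m\<ge>N. \<forall>k\<ge>N.
            sqrt (ip (\<lambda>x. s m x - s k x) (\<lambda>x. s m x - s k x)) < e)
        \<longrightarrow> (\<exists>f\<in>H. (\<lambda>n. sqrt (ip (\<lambda>x. s n x - f x) (\<lambda>x. s n x - f x)))
                         \<longlonglongrightarrow> 0)) \<and>
     (\<forall>x. (\<lambda>s. K s x) \<in> H) \<and>
     (\<forall>f\<in>H. \<forall>x. ip f (\<lambda>s. K s x) = f x)"

definition l2_coeff :: "'a measure \<Rightarrow> (nat \<Rightarrow> 'a \<Rightarrow> real) \<Rightarrow> ('a \<Rightarrow> real) \<Rightarrow> nat \<Rightarrow> real" where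
  "l2_coeff \<mu> phi h j = (LINT x|\<mu>. h x * phi j x)"

definition norm_1C :: "'a measure \<Rightarrow> (nat \<Rightarrow> real) \<Rightarrow> (nat \<Rightarrow> 'a \<Rightarrow> real) \<Rightarrow> ('a \<Rightarrow> real) \<Rightarrow> ennreal" where
  "norm_1C \<mu> lam phi h = (\<Sum>j. ennreal (\<bar>l2_coeff \<mu> phi h j\<bar> / sqrt (lam j)))"

definition adjacent :: "'d list \<Rightarrow> 'd list \<Rightarrow> bool" where
  "adjacent D D' \<longleftrightarrow> length D = length D' \<and> card {i. i < length D \<and> D ! i \<noteq> D' ! i} = 1"

definition reg_risk :: "('y \<Rightarrow> real \<Rightarrow> real) \<Rightarrow> real \<Rightarrow> (('a \<Rightarrow> real) \<Rightarrow> ('a \<Rightarrow> real) \<Rightarrow> real)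
                         \<Rightarrow> ('a \<times> 'y) list \<Rightarrow> ('a \<Rightarrow> real) \<Rightarrow> real" where
  "reg_risk loss \<psi> ip D f =
     (1 / real (length D)) * (\<Sum>i<length D. loss (snd (D ! i)) (f (fst (D ! i)))) + \<psi> * ip f f"

definition is_minimizer :: "('y \<Rightarrow> real \<Rightarrow> real) \<Rightarrow> real \<Rightarrow> ('a \<Rightarrow> real) set
      \<Rightarrow> (('a \<Rightarrow> real) \<Rightarrow> ('a \<Rightarrow> real) \<Rightarrow> real) \<Rightarrow> ('a \<times> 'y) list \<Rightarrow> ('a \<Rightarrow> real) \<Rightarrow> bool" where
  "is_minimizer loss \<psi> H ip D f \<longleftrightarrow> f \<in> H \<and> (\<forall>g\<in>H. reg_risk loss \<psi> ip D f \<le> reg_risk loss \<psi> ip D g)"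

end

theory Submission
  imports Defs
begin


locale rk =
  fixes K :: "'a \<Rightarrow> 'a \<Rightarrow> real" and H :: "('a \<Rightarrow> real) set" and ip
  assumes R: "rkhs K H ip"
begin

lemma zero_in: "(\<lambda>x. 0) \<in> H" using R unfolding rkhs_def by blast
lemma lin: "f \<in> H \<Longrightarrow> g \<in> H \<Longrightarrow> (\<lambda>x. a * f x + b * g x) \<in> H"
  using R unfolding rkhs_def by blast
lemma sym: "f \<in> H \<Longrightarrow> g \<in> H \<Longrightarrow> ip f g = ip g f"
  using R unfolding rkhs_def by blast
lemma iplin: "f \<in> H \<Longrightarrow> g \<in> H \<Longrightarrow> h \<in> H \<Longrightarrow> ip (\<lambda>x. a * f x + b * g x) h = a * ip f h + b * ip g h"
  using R unfolding rkhs_def by blast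
lemma pos: "f \<in> H \<Longrightarrow> 0 \<le> ip f f"
  using R unfolding rkhs_def by blast
lemma pos0: "f \<in> H \<Longrightarrow> ip f f = 0 \<Longrightarrow> f = (\<lambda>x. 0)"
  using R unfolding rkhs_def by blast
lemma Kin: "(\<lambda>s. K s x) \<in> H"
  using R unfolding rkhs_def by blast
lemma repr: "f \<in> H \<Longrightarrow> ip f (\<lambda>s. K s x) = f x"
  using R unfolding rkhs_def by blast

lemma diff_in: "f \<in> H \<Longrightarrow> g \<in> H \<Longrightarrow> (\<lambda>x. f x - g x) \<in> H"
  using lin[of f g 1 "-1"] by simp
lemma ipdiff: "f \<in> H \<Longrightarrow> g \<in> H \<Longrightarrow> h \<in> H \<Longrightarrow> ip (\<lambda>x. f x - g x) h = ip f h - ip g h"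
  using iplin[of f g h 1 "-1"] by simp
lemma ipzero: "h \<in> H \<Longrightarrow> ip (\<lambda>x. 0) h = 0"
  using iplin[of h h h 0 0] by simp

lemma quad: assumes f: "f \<in> H" and g: "g \<in> H"
  shows "ip (\<lambda>x. a * f x + b * g x) (\<lambda>x. a * f x + b * g x)
     = a^2 * ip f f + 2*a*b * ip f g + b^2 * ip g g"
proof -
  let ?w = "\<lambda>x. a * f x + b * g x"
  have w: "?w \<in> H" using lin f g .
  have "ip ?w ?w = a * ip f ?w + b * ip g ?w" using iplin[OF f g w] .
  also have "ip f ?w = ip ?w f" using sym f w by simp
  also have "\<dots> = a * ip f f + b * ip g f" using iplin[OF f g f] .
  also have "ip g ?w = ip ?w g" using sym g w by simp
  also have "\<dots> = a * ip f g + b * ip g g" using iplin[OF f g g] .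
  finally show ?thesis using sym[OF f g] by (simp add: algebra_simps power2_eq_square)
qed

lemma CS: assumes f: "f \<in> H" and g: "g \<in> H"
  shows "(ip f g)^2 \<le> ip f f * ip g g"
proof (cases "ip g g = 0")
  case True
  then have "g = (\<lambda>x. 0)" using pos0 g by blast
  then have "ip f g = 0" using sym[OF f g] ipzero f by simp
  then show ?thesis using pos[OF f] pos[OF g] by simp
next
  case False
  then have gp: "ip g g > 0" using pos[OF g] by simp
  define t where "t = ip f g / ip g g"
  have "0 \<le> ip (\<lambda>x. 1 * f x + (-t) * g x) (\<lambda>x. 1 * f x + (-t) * g x)"
    using pos lin f g by blast
  also have "\<dots> = ip f f - 2 * t * ip f g + t^2 * ip g g" using quad[OF f g, of 1 "-t"] by simp
  also have "\<dots> = ip f f - (ip f g)^2 / ip g g" using gp unfolding t_def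
    by (simp add: field_simps power2_eq_square)
  finally show ?thesis using gp by (simp add: field_simps)
qed

lemma Kdiag: "ip (\<lambda>s. K s x) (\<lambda>s. K s x) = K x x"
  using repr[OF Kin] .

lemma evalbound: assumes f: "f \<in> H" shows "\<bar>f x\<bar> \<le> sqrt (ip f f) * sqrt (K x x)"
proof -
  have "(f x)^2 \<le> ip f f * K x x" using CS[OF f Kin, of x] repr[OF f] Kdiag by simp
  then have "sqrt ((f x)^2) \<le> sqrt (ip f f * K x x)" using real_sqrt_le_mono by blast
  then show ?thesis by (simp add: real_sqrt_mult)
qed

lemma finsum: "(\<lambda>t. \<Sum>i<(n::nat). c i * K t (x i)) \<in> H \<and>
   (\<forall>w\<in>H. ip (\<lambda>t. \<Sum>i<n. c i * K t (x i)) w = (\<Sum>i<n. c i * w (x i)))"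
proof (induction n)
  case 0
  then show ?case using zero_in ipzero by simp
next
  case (Suc n)
  let ?u = "\<lambda>t. \<Sum>i<n. c i * K t (x i)"
  have e: "(\<lambda>t. \<Sum>i<Suc n. c i * K t (x i)) = (\<lambda>t. 1 * ?u t + c n * K t (x n))" by simp
  have u: "?u \<in> H" using Suc by blast
  show ?case unfolding e
  proof (rule conjI)
    show "(\<lambda>t. 1 * ?u t + c n * K t (x n)) \<in> H" using lin[OF u Kin] .
    show "\<forall>w\<in>H. ip (\<lambda>t. 1 * ?u t + c n * K t (x n)) w = (\<Sum>i<Suc n. c i * w (x i))"
    proof
      fix w assume w: "w \<in> H"
      have "ip (\<lambda>t. 1 * ?u t + c n * K t (x n)) w = ip ?u w + c n * ip (\<lambda>t. K t (x n)) w"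
        using iplin[OF u Kin w, of 1 "c n" "x n"] by simp
      also have "ip (\<lambda>t. K t (x n)) w = w (x n)" using sym[OF Kin w] repr[OF w] by simp
      finally show "ip (\<lambda>t. 1 * ?u t + c n * K t (x n)) w = (\<Sum>i<Suc n. c i * w (x i))"
        using Suc w by simp
    qed
  qed
qed

lemma psd_form: assumes h: "h \<in> H"
  shows "(\<Sum>i<(n::nat). c i * h (x i))^2 \<le> ip h h * (\<Sum>i<n. \<Sum>k<n. c i * c k * K (x i) (x k))"
proof -
  let ?u = "\<lambda>t. \<Sum>i<n. c i * K t (x i)"
  have u: "?u \<in> H" and ipu: "\<And>w. w \<in> H \<Longrightarrow> ip ?u w = (\<Sum>i<n. c i * w (x i))"
    using finsum by blast+
  have "ip ?u ?u = (\<Sum>i<n. \<Sum>k<n. c i * c k * K (x i) (x k))"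
    using ipu[OF u] by (simp add: sum_distrib_left mult.assoc)
  moreover have "ip h ?u = (\<Sum>i<n. c i * h (x i))" using sym[OF h u] ipu[OF h] by simp
  ultimately show ?thesis using CS[OF h u] by simp
qed

end



lemma psd_integral:
  fixes F :: "'a \<Rightarrow> 'a \<Rightarrow> real" and \<mu> :: "'a measure"
  assumes fin: "finite_measure \<mu>"
  and sym: "\<And>s t. F s t = F t s"
  and psd: "\<And>n (x::nat\<Rightarrow>'a). 0 \<le> (\<Sum>i<n. \<Sum>k<n. F (x i) (x k))"
  and int1: "\<And>x. integrable \<mu> (F x)"
  and intA: "integrable \<mu> (\<lambda>s. LINT t|\<mu>. F s t)"
  and intD: "integrable \<mu> (\<lambda>s. F s s)"
  shows "0 \<le> (LINT s|\<mu>. LINT t|\<mu>. F s t)"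
proof -
  interpret finite_measure \<mu> by (rule fin)
  define m where "m = measure \<mu> (space \<mu>)"
  define A where "A s = (LINT t|\<mu>. F s t)" for s
  define I where "I = (LINT s|\<mu>. A s)"
  define D where "D = (LINT s|\<mu>. F s s)"
  have m0: "m \<ge> 0" unfolding m_def by simp
  define G where "G k n x = m^(k+2) * (\<Sum>i<n. \<Sum>j<n. F (x i) (x j)) + 2*real k*m^(k+1)*(\<Sum>i<n. A (x i))
      + real k*m^(k+1)*D + real k*(real k - 1)*m^k*I" for k n and x :: "nat \<Rightarrow> 'a"
  have intA': "integrable \<mu> A" using intA unfolding A_def .
  have step: "G (Suc k) n x = (LINT s|\<mu>. G k (Suc n) (x(n:=s)))" for k n x
  proof -
    define P where "P = (\<Sum>i<n. \<Sum>j<n. F (x i) (x j))"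
    define Q where "Q = (\<Sum>i<n. A (x i))"
    define c0 where "c0 = m^(k+2)*P + 2*real k*m^(k+1)*Q + real k*m^(k+1)*D + real k*(real k - 1)*m^k*I"
    have e1: "G k (Suc n) (x(n:=s)) = c0 + (2*m^(k+2)) * (\<Sum>i<n. F (x i) s) + m^(k+2) * F s s
         + (2*real k*m^(k+1)) * A s" for s
    proof -
      have a: "(\<Sum>i<Suc n. \<Sum>j<Suc n. F ((x(n:=s)) i) ((x(n:=s)) j)) = P + 2*(\<Sum>i<n. F (x i) s) + F s s"
      proof -
        have "(\<Sum>i<Suc n. \<Sum>j<Suc n. F ((x(n:=s)) i) ((x(n:=s)) j))
          = (\<Sum>i<n. (\<Sum>j<n. F (x i) (x j)) + F (x i) s) + ((\<Sum>j<n. F s (x j)) + F s s)"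
          by (simp add: sum.lessThan_Suc)
        also have "(\<Sum>j<n. F s (x j)) = (\<Sum>i<n. F (x i) s)" using sym by simp
        finally show ?thesis unfolding P_def by (simp add: sum.distrib)
      qed
      have b: "(\<Sum>i<Suc n. A ((x(n:=s)) i)) = Q + A s" unfolding Q_def by (simp add: sum.lessThan_Suc)
      show ?thesis unfolding G_def a b c0_def by (simp add: algebra_simps)
    qed
    have "(LINT s|\<mu>. G k (Suc n) (x(n:=s))) = c0 * m + (2*m^(k+2)) * Q + m^(k+2) * D + (2*real k*m^(k+1)) * I"
    proof -
      have i1: "integrable \<mu> (\<lambda>s. \<Sum>i<n. F (x i) s)" using int1 by auto
      have i2: "(LINT s|\<mu>. (\<Sum>i<n. F (x i) s)) = Q" unfolding Q_def A_def
        using Bochner_Integration.integral_sum[where I="{..<n}" and M=\<mu> and f="\<lambda>i s. F (x i) s"] int1 by simp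
      show ?thesis unfolding e1 using i1 intD intA' i2
        by (simp add: m_def D_def I_def)
    qed
    also have "\<dots> = G (Suc k) n x" unfolding c0_def G_def P_def[symmetric] Q_def[symmetric]
      by (simp add: algebra_simps)
    finally show ?thesis by simp
  qed
  have key: "\<forall>n x. 0 \<le> G k n x" for k
  proof (induction k)
    case 0
    then show ?case unfolding G_def using psd m0 by simp
  next
    case (Suc k)
    show ?case
    proof (intro allI)
      fix n x
      show "0 \<le> G (Suc k) n x" unfolding step
        by (rule integral_nonneg_AE) (use Suc in auto)
    qed
  qed
  show ?thesis
  proof (cases "m = 0")
    case True
    then have "emeasure \<mu> (space \<mu>) = 0" unfolding m_def by (simp add: emeasure_eq_measure)
    then have "space \<mu> \<in> null_sets \<mu>" by auto
    then have "AE s in \<mu>. A s = 0" by (rule AE_I') auto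
    then have "I = 0" unfolding I_def by (rule integral_eq_zero_AE)
    then show ?thesis unfolding I_def A_def by simp
  next
    case False
    then have mp: "m > 0" using m0 by simp
    show ?thesis
    proof (rule ccontr)
      assume "\<not> ?thesis"
      then have In: "I < 0" unfolding I_def A_def by simp
      obtain k :: nat where k: "real k > 1 + m * \<bar>D\<bar> / (- I)" using reals_Archimedean2 by blast
      have k1: "real k \<ge> 1" using k In mp
        by (smt (verit, del_insts) divide_nonneg_pos mult_nonneg_nonneg abs_ge_zero)
      have "0 \<le> G k 0 x" for x using key by blast
      then have "0 \<le> real k*m^(k+1)*D + real k*(real k - 1)*m^k*I" unfolding G_def by simp
      also have "\<dots> = (real k * m^k) * (m * D + (real k - 1) * I)" by (simp add: algebra_simps)
      finally have c: "0 \<le> (real k * m^k) * (m * D + (real k - 1) * I)" .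
      have "real k * m^k > 0" using k1 mp by simp
      with c have "0 \<le> m * D + (real k - 1) * I"
          by (simp add: zero_le_mult_iff)
      moreover have "m * D \<le> m * \<bar>D\<bar>" using mp by (intro mult_left_mono) auto
      ultimately have "(real k - 1) * (- I) \<le> m * \<bar>D\<bar>" by (simp add: algebra_simps)
      moreover have "m * \<bar>D\<bar> / (- I) < real k - 1" using k by linarith
      then have "m * \<bar>D\<bar> < (real k - 1) * (- I)" using In
        by (subst (asm) pos_divide_less_eq) auto
      ultimately show False by simp
    qed
  qed
qed




locale mer =
  fixes \<mu> :: "'a measure" and lam :: "nat \<Rightarrow> real" and \<phi> :: "nat \<Rightarrow> 'a \<Rightarrow> real" and \<eta> :: real
  assumes fin: "finite_measure \<mu>"
    and lam_pos: "\<And>j. lam j > 0"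
    and lam_mono: "\<And>j. lam (Suc j) \<le> lam j"
    and phi_meas[measurable]: "\<And>j. \<phi> j \<in> borel_measurable \<mu>"
    and phi_L2: "\<And>j. integrable \<mu> (\<lambda>x. (\<phi> j x)\<^sup>2)"
    and phi_orth: "\<And>i j. (LINT x|\<mu>. \<phi> i x * \<phi> j x) = (if i = j then 1 else 0)"
    and msum: "\<And>s. summable (\<lambda>j. lam j * (\<phi> j s)^2)"
    and eta_gt: "\<eta> > 1"
    and kbdd: "bdd_above (range (\<lambda>x. kernel_pow lam \<phi> \<eta> x x))"
begin

abbreviation "K \<equiv> kernel_pow lam \<phi> \<eta>"
definition "k2 = (SUP x. K x x)"

lemma lp_le: "lam j powr \<eta> \<le> lam 0 powr (\<eta> - 1) * lam j"
proof -
  have "lam j \<le> lam 0" using lift_Suc_antimono_le[of lam, OF lam_mono] by simp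
  then have "lam j powr (\<eta> - 1) \<le> lam 0 powr (\<eta> - 1)"
    using powr_mono2[of "\<eta> - 1" "lam j" "lam 0"] eta_gt lam_pos[of j] by simp
  moreover have "lam j powr \<eta> = lam j powr (\<eta> - 1) * lam j"
    using powr_add[of "lam j" "\<eta> - 1" 1] lam_pos[of j] by simp
  ultimately show ?thesis using lam_pos[of j] by (simp add: mult_right_mono)
qed

lemma lp_pos: "lam j powr \<eta> > 0" using lam_pos[of j] by simp

lemma sq_summ: "summable (\<lambda>j. lam j powr \<eta> * (\<phi> j s)^2)"
proof (rule summable_comparison_test[OF _ summable_mult[OF msum[of s], of "lam 0 powr (\<eta> - 1)"]])
  show "\<exists>N. \<forall>n\<ge>N. norm (lam n powr \<eta> * (\<phi> n s)\<^sup>2) \<le> lam 0 powr (\<eta> - 1) * (lam n * (\<phi> n s)\<^sup>2)"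
    using lp_le lp_pos by (auto intro!: exI[of _ 0] simp: mult.assoc[symmetric] intro!: mult_right_mono)
qed

lemma K_diag: "K s s = (\<Sum>j. lam j powr \<eta> * (\<phi> j s)^2)"
  unfolding kernel_pow_def by (simp add: power2_eq_square mult.assoc)

lemma K_sym: "K s t = K t s"
  unfolding kernel_pow_def by (simp add: ac_simps)

lemma K_diag_nonneg: "K s s \<ge> 0"
  unfolding K_diag using sq_summ by (intro suminf_nonneg) (auto intro: mult_nonneg_nonneg)

lemma K_le: "K s s \<le> k2"
  unfolding k2_def by (rule cSUP_upper[OF UNIV_I kbdd])

lemma k2_nonneg: "k2 \<ge> 0" using K_diag_nonneg K_le order_trans by blast

lemma amgm: "\<bar>a\<bar> * \<bar>b\<bar> \<le> ((a::real)^2 + b^2) / 2"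
proof -
  have "0 \<le> (\<bar>a\<bar> - \<bar>b\<bar>)^2" by simp
  then show ?thesis by (simp add: power2_eq_square algebra_simps)
qed

lemma abs_le_sq: "\<bar>y::real\<bar> \<le> 1 + y^2"
proof (cases "\<bar>y\<bar> \<le> 1")
  case True then show ?thesis by (simp add: add_increasing2)
next
  case False
  then have "\<bar>y\<bar> * 1 \<le> \<bar>y\<bar> * \<bar>y\<bar>" by (intro mult_left_mono) auto
  then show ?thesis by (simp add: power2_eq_square abs_mult_self_eq)
qed

lemma abs_prod_le: "\<bar>a * b\<bar> \<le> (a::real)^2 + b^2"
  unfolding abs_mult using amgm[of a b] mult_nonneg_nonneg[OF abs_ge_zero[of a] abs_ge_zero[of b]]
    zero_le_power2[of a] zero_le_power2[of b] by argo

lemma abs_term_le: "lam j powr \<eta> * \<bar>\<phi> j s\<bar> * \<bar>\<phi> j t\<bar>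
   \<le> (lam j powr \<eta> * (\<phi> j s)^2 + lam j powr \<eta> * (\<phi> j t)^2) / 2"
  using mult_left_mono[OF amgm[of "\<phi> j s" "\<phi> j t"], of "lam j powr \<eta>"] lp_pos[of j]
  by (simp add: algebra_simps)

lemma abs_summ: "summable (\<lambda>j. lam j powr \<eta> * \<bar>\<phi> j s\<bar> * \<bar>\<phi> j t\<bar>)"
  by (rule summable_comparison_test[OF _ summable_divide[OF summable_add[OF sq_summ[of s] sq_summ[of t]], of 2]])
     (use abs_term_le lp_pos in \<open>auto intro!: exI[of _ 0]\<close>)

lemma abs_suminf_le: "(\<Sum>j. lam j powr \<eta> * \<bar>\<phi> j s\<bar> * \<bar>\<phi> j t\<bar>) \<le> k2"
proof -
  have "(\<Sum>j. lam j powr \<eta> * \<bar>\<phi> j s\<bar> * \<bar>\<phi> j t\<bar>)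
     \<le> (\<Sum>j. (lam j powr \<eta> * (\<phi> j s)^2 + lam j powr \<eta> * (\<phi> j t)^2) / 2)"
    by (rule suminf_le[OF abs_term_le abs_summ summable_divide[OF summable_add[OF sq_summ[of s] sq_summ[of t]]]])
  also have "\<dots> = (K s s + K t t) / 2"
    unfolding K_diag using suminf_add[OF sq_summ[of s] sq_summ[of t]] suminf_divide[OF summable_add[OF sq_summ[of s] sq_summ[of t]]]
    by simp
  also have "\<dots> \<le> k2" using K_le[of s] K_le[of t] by simp
  finally show ?thesis .
qed

lemma summ: "summable (\<lambda>j. lam j powr \<eta> * \<phi> j s * \<phi> j t)"
  by (rule summable_rabs_cancel) (use abs_summ[of s t] lp_pos in \<open>simp add: abs_mult\<close>)

lemma psum_bound: "\<bar>\<Sum>j<m. lam j powr \<eta> * \<phi> j s * \<phi> j t\<bar> \<le> k2"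
proof -
  have "\<bar>\<Sum>j<m. lam j powr \<eta> * \<phi> j s * \<phi> j t\<bar> \<le> (\<Sum>j<m. lam j powr \<eta> * \<bar>\<phi> j s\<bar> * \<bar>\<phi> j t\<bar>)"
    using sum_abs[of "\<lambda>j. lam j powr \<eta> * \<phi> j s * \<phi> j t" "{..<m}"] lp_pos by (simp add: abs_mult)
  also have "\<dots> \<le> (\<Sum>j. lam j powr \<eta> * \<bar>\<phi> j s\<bar> * \<bar>\<phi> j t\<bar>)"
    by (rule sum_le_suminf[OF abs_summ]) (use lp_pos in \<open>auto intro: mult_nonneg_nonneg\<close>)
  finally show ?thesis using abs_suminf_le[of s t] by linarith
qed

lemma K_lim: "(\<lambda>m. \<Sum>j<m. lam j powr \<eta> * \<phi> j s * \<phi> j t) \<longlonglongrightarrow> K s t"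
  unfolding kernel_pow_def using summable_LIMSEQ[OF summ] .

lemma K_bound: "\<bar>K s t\<bar> \<le> k2"
  by (rule LIMSEQ_le_const2[OF tendsto_rabs[OF K_lim]]) (use psum_bound in auto)

lemma K_meas1[measurable]: "(\<lambda>t. K s t) \<in> borel_measurable \<mu>"
  by (rule borel_measurable_LIMSEQ_real[OF K_lim]) measurable

lemma K_meas2[measurable]: "(\<lambda>s. K s t) \<in> borel_measurable \<mu>"
  by (rule borel_measurable_LIMSEQ_real[OF K_lim]) measurable

lemma K_meas_diag[measurable]: "(\<lambda>s. K s s) \<in> borel_measurable \<mu>"
  by (rule borel_measurable_LIMSEQ_real[OF K_lim]) measurable

lemma int_const: "integrable \<mu> (\<lambda>x. c::real)"
proof -
  interpret finite_measure \<mu> by (rule fin)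
  show ?thesis by simp
qed

lemma phi_int: "integrable \<mu> (\<phi> j)"
proof (rule Bochner_Integration.integrable_bound[where f="\<lambda>x. 1 + (\<phi> j x)^2"])
  show "integrable \<mu> (\<lambda>x. 1 + (\<phi> j x)\<^sup>2)" using int_const phi_L2 by (rule Bochner_Integration.integrable_add)
  show "AE x in \<mu>. norm (\<phi> j x) \<le> norm (1 + (\<phi> j x)\<^sup>2)"
  proof (rule AE_I2)
    fix x have "\<bar>\<phi> j x\<bar> \<le> 1 + (\<phi> j x)^2" by (rule abs_le_sq)
    then show "norm (\<phi> j x) \<le> norm (1 + (\<phi> j x)\<^sup>2)" by simp
  qed
qed simp

lemma prod_int: "integrable \<mu> (\<lambda>x. \<phi> j x * \<phi> k x)"
proof (rule Bochner_Integration.integrable_bound[where f="\<lambda>x. (\<phi> j x)^2 + (\<phi> k x)^2"])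
  show "integrable \<mu> (\<lambda>x. (\<phi> j x)^2 + (\<phi> k x)\<^sup>2)" using phi_L2 phi_L2 by (rule Bochner_Integration.integrable_add)
  show "AE x in \<mu>. norm (\<phi> j x * \<phi> k x) \<le> norm ((\<phi> j x)^2 + (\<phi> k x)\<^sup>2)"
  proof (rule AE_I2)
    fix x
    have "\<bar>(\<phi> j x)^2 + (\<phi> k x)\<^sup>2\<bar> = (\<phi> j x)^2 + (\<phi> k x)\<^sup>2" by simp
    then show "norm (\<phi> j x * \<phi> k x) \<le> norm ((\<phi> j x)^2 + (\<phi> k x)\<^sup>2)"
      using abs_prod_le[of "\<phi> j x" "\<phi> k x"] by simp
  qed
qed simp

lemma vK_int: assumes v: "integrable \<mu> v" shows "integrable \<mu> (\<lambda>s. v s * K x s)"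
proof (rule Bochner_Integration.integrable_bound[where f="\<lambda>s. k2 * v s"])
  show "integrable \<mu> (\<lambda>s. k2 * v s)" using v by simp
  show "AE s in \<mu>. norm (v s * K x s) \<le> norm (k2 * v s)"
    using K_bound[of x] k2_nonneg by (intro AE_I2) (simp add: abs_mult mult_left_mono mult.commute)
qed (use v in measurable)

lemma interchange:
  assumes v: "integrable \<mu> v" and vp: "\<And>j. integrable \<mu> (\<lambda>s. v s * \<phi> j s)"
  shows "(\<lambda>m. \<Sum>j<m. lam j powr \<eta> * \<phi> j x * (LINT s|\<mu>. v s * \<phi> j s)) \<longlonglongrightarrow> (LINT s|\<mu>. v s * K x s)"
proof -
  have e: "(LINT s|\<mu>. v s * (\<Sum>j<m. lam j powr \<eta> * \<phi> j x * \<phi> j s))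
      = (\<Sum>j<m. lam j powr \<eta> * \<phi> j x * (LINT s|\<mu>. v s * \<phi> j s))" for m
  proof -
    have "(LINT s|\<mu>. v s * (\<Sum>j<m. lam j powr \<eta> * \<phi> j x * \<phi> j s))
       = (LINT s|\<mu>. (\<Sum>j<m. lam j powr \<eta> * \<phi> j x * (v s * \<phi> j s)))"
      by (simp add: sum_distrib_left ac_simps)
    also have "\<dots> = (\<Sum>j<m. (LINT s|\<mu>. lam j powr \<eta> * \<phi> j x * (v s * \<phi> j s)))"
      by (rule Bochner_Integration.integral_sum) (use vp in auto)
    also have "\<dots> = (\<Sum>j<m. lam j powr \<eta> * \<phi> j x * (LINT s|\<mu>. v s * \<phi> j s))" by simp
    finally show ?thesis .
  qed
  have "(\<lambda>m. LINT s|\<mu>. v s * (\<Sum>j<m. lam j powr \<eta> * \<phi> j x * \<phi> j s)) \<longlonglongrightarrow> (LINT s|\<mu>. v s * K x s)"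
  proof (rule integral_dominated_convergence[where w="\<lambda>s. k2 * \<bar>v s\<bar>"])
    show "integrable \<mu> (\<lambda>s. k2 * \<bar>v s\<bar>)" using v by simp
    show "AE s in \<mu>. (\<lambda>m. v s * (\<Sum>j<m. lam j powr \<eta> * \<phi> j x * \<phi> j s)) \<longlonglongrightarrow> v s * K x s"
      by (intro AE_I2 tendsto_mult_left K_lim)
    show "AE s in \<mu>. norm (v s * (\<Sum>j<m. lam j powr \<eta> * \<phi> j x * \<phi> j s)) \<le> k2 * \<bar>v s\<bar>" for m
    proof (rule AE_I2)
      fix s
      have "\<bar>v s\<bar> * \<bar>\<Sum>j<m. lam j powr \<eta> * \<phi> j x * \<phi> j s\<bar> \<le> \<bar>v s\<bar> * k2"
        using psum_bound[where m=m and s=x and t=s] by (intro mult_left_mono) auto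
      then show "norm (v s * (\<Sum>j<m. lam j powr \<eta> * \<phi> j x * \<phi> j s)) \<le> k2 * \<bar>v s\<bar>"
        by (simp add: abs_mult mult.commute)
    qed
  qed (use v in measurable)
  then show ?thesis unfolding e .
qed

end



locale merrk = mer \<mu> lam \<phi> \<eta> + rk "kernel_pow lam \<phi> \<eta>" H ip
  for \<mu> lam \<phi> \<eta> H ip
begin

lemma bessel:
  assumes h: "h \<in> H"
  shows "(\<Sum>j<N. (l2_coeff \<mu> \<phi> h j)^2 / lam j powr \<eta>) \<le> ip h h"
proof -
  interpret finite_measure \<mu> by (rule fin)
  define J where "J = {j. j < N \<and> integrable \<mu> (\<lambda>x. h x * \<phi> j x)}"
  define c where "c j = l2_coeff \<mu> \<phi> h j" for j
  have finJ: "finite J" unfolding J_def by auto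
  have hJ: "\<And>j. j \<in> J \<Longrightarrow> integrable \<mu> (\<lambda>x. h x * \<phi> j x)" unfolding J_def by auto
  have c0: "c j = 0" if "j < N" "j \<notin> J" for j
    using that unfolding c_def l2_coeff_def J_def by (auto intro: not_integrable_integral_eq)
  define S where "S = (\<Sum>j\<in>J. (c j)^2 / lam j powr \<eta>)"
  have Seq: "(\<Sum>j<N. (l2_coeff \<mu> \<phi> h j)^2 / lam j powr \<eta>) = S"
    unfolding S_def c_def[symmetric]
    by (rule sum.mono_neutral_right) (auto simp: J_def c0)
  define b where "b j = c j / lam j powr \<eta>" for j
  define a where "a s = (\<Sum>j\<in>J. b j * \<phi> j s)" for s
  define g where "g s = (\<Sum>j\<in>J. b j * (h s * \<phi> j s))" for s
  define B where "B = ip h h"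
  have g_eq: "g s = a s * h s" for s unfolding g_def a_def by (simp add: sum_distrib_left sum_distrib_right ac_simps)
  have a_int: "integrable \<mu> a" unfolding a_def using phi_int by auto
  have aphi_int: "integrable \<mu> (\<lambda>s. a s * \<phi> k s)" for k
    unfolding a_def sum_distrib_right using prod_int by (auto simp: mult.assoc)
  have aphi: "(LINT s|\<mu>. a s * \<phi> k s) = (if k \<in> J then b k else 0)" for k
  proof -
    have "(LINT s|\<mu>. a s * \<phi> k s) = (\<Sum>j\<in>J. b j * (LINT s|\<mu>. \<phi> j s * \<phi> k s))"
      unfolding a_def sum_distrib_right
      by (subst Bochner_Integration.integral_sum) (use prod_int in \<open>auto simp: mult.assoc\<close>)
    also have "\<dots> = (\<Sum>j\<in>J. if j = k then b j else 0)" by (intro sum.cong) (auto simp: phi_orth)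
    also have "\<dots> = (if k \<in> J then b k else 0)" using finJ by (simp add: sum.delta')
    finally show ?thesis .
  qed
  have g_int: "integrable \<mu> g" unfolding g_def using hJ by auto
  have g_integral: "(LINT s|\<mu>. g s) = S"
  proof -
    have "(LINT s|\<mu>. g s) = (\<Sum>j\<in>J. b j * c j)" unfolding g_def c_def l2_coeff_def
      by (subst Bochner_Integration.integral_sum) (use hJ in auto)
    also have "\<dots> = S" unfolding S_def b_def by (simp add: power2_eq_square)
    finally show ?thesis .
  qed
  define IK where "IK x = (\<Sum>j\<in>J. lam j powr \<eta> * \<phi> j x * b j)" for x
  have aK: "(LINT t|\<mu>. a t * K x t) = IK x" for x
  proof -
    have lim: "(\<lambda>m. \<Sum>j<m. lam j powr \<eta> * \<phi> j x * (LINT s|\<mu>. a s * \<phi> j s)) \<longlonglongrightarrow> (LINT t|\<mu>. a t * K x t)"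
      by (rule interchange[OF a_int aphi_int])
    have ev: "(\<Sum>j<m + N. lam j powr \<eta> * \<phi> j x * (LINT s|\<mu>. a s * \<phi> j s)) = IK x" for m
    proof -
      have "(\<Sum>j<m + N. lam j powr \<eta> * \<phi> j x * (LINT s|\<mu>. a s * \<phi> j s))
          = (\<Sum>j<m + N. if j \<in> J then lam j powr \<eta> * \<phi> j x * b j else 0)"
        unfolding aphi by (intro sum.cong) auto
      also have "\<dots> = (\<Sum>j\<in>J. lam j powr \<eta> * \<phi> j x * b j)"
        using finJ by (subst sum.If_cases) (auto simp: J_def intro!: arg_cong2[where f=sum] )
      finally show ?thesis unfolding IK_def .
    qed
    have "(\<lambda>m. \<Sum>j<m + N. lam j powr \<eta> * \<phi> j x * (LINT s|\<mu>. a s * \<phi> j s)) \<longlonglongrightarrow> (LINT t|\<mu>. a t * K x t)"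
      using LIMSEQ_ignore_initial_segment[OF lim, of N] .
    then have "(\<lambda>m. IK x) \<longlonglongrightarrow> (LINT t|\<mu>. a t * K x t)" unfolding ev .
    then show ?thesis using LIMSEQ_const_iff by metis
  qed
  define F where "F s t = B * (a s * a t * K s t) - g s * g t" for s t
  define A where "A s = (LINT t|\<mu>. F s t)" for s
  have F_int: "integrable \<mu> (F x)" for x
  proof -
    have "integrable \<mu> (\<lambda>t. (B * a x) * (a t * K x t) - g x * g t)"
      using vK_int[OF a_int, of x] g_int by auto
    then show ?thesis unfolding F_def by (simp add: ac_simps)
  qed
  have A_eq: "A s = B * a s * IK s - g s * S" for s
  proof -
    have "A s = (LINT t|\<mu>. (B * a s) * (a t * K s t) - g s * g t)" unfolding A_def F_def
      by (simp add: ac_simps)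
    also have "\<dots> = (B * a s) * (LINT t|\<mu>. a t * K s t) - g s * (LINT t|\<mu>. g t)"
      using vK_int[OF a_int, of s] g_int by simp
    finally show ?thesis unfolding aK g_integral by simp
  qed
  have aIK_eq: "(\<lambda>s. a s * IK s) = (\<lambda>s. \<Sum>j\<in>J. (lam j powr \<eta> * b j) * (a s * \<phi> j s))"
    unfolding IK_def sum_distrib_left by (simp add: ac_simps)
  have aIK_int: "integrable \<mu> (\<lambda>s. a s * IK s)"
    unfolding aIK_eq using aphi_int by auto
  have aIK_integral: "(LINT s|\<mu>. a s * IK s) = S"
  proof -
    have "(LINT s|\<mu>. a s * IK s) = (LINT s|\<mu>. (\<Sum>j\<in>J. (lam j powr \<eta> * b j) * (a s * \<phi> j s)))"
      by (simp add: aIK_eq)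
    also have "\<dots> = (\<Sum>j\<in>J. (lam j powr \<eta> * b j) * (LINT s|\<mu>. a s * \<phi> j s))"
      by (subst Bochner_Integration.integral_sum) (use aphi_int in auto)
    also have "\<dots> = (\<Sum>j\<in>J. (lam j powr \<eta> * b j) * b j)" unfolding aphi by simp
    also have "\<dots> = S" unfolding S_def b_def using lp_pos
      by (intro sum.cong) (auto simp: power2_eq_square field_simps)
    finally show ?thesis .
  qed
  have A_int: "integrable \<mu> A"
  proof -
    have "integrable \<mu> (\<lambda>s. B * (a s * IK s) - S * g s)" using aIK_int g_int by auto
    then show ?thesis unfolding A_eq by (simp add: ac_simps)
  qed
  have A_integral: "(LINT s|\<mu>. A s) = B * S - S * S"
  proof -
    have "(LINT s|\<mu>. A s) = (LINT s|\<mu>. B * (a s * IK s) - S * g s)" unfolding A_eq by (simp add: ac_simps)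
    also have "\<dots> = B * S - S * S" using aIK_int g_int aIK_integral g_integral by simp
    finally show ?thesis .
  qed
  have aa_eq: "(\<lambda>s. a s * a s) = (\<lambda>s. \<Sum>j\<in>J. b j * (a s * \<phi> j s))"
    by (rule ext) (simp add: a_def[of s for s] sum_distrib_left ac_simps)
  have aa_int: "integrable \<mu> (\<lambda>s. a s * a s)"
    unfolding aa_eq using aphi_int by auto
  have a_meas[measurable]: "a \<in> borel_measurable \<mu>" using a_int by auto
  have g_meas[measurable]: "g \<in> borel_measurable \<mu>" using g_int by auto
  have hbound: "\<bar>h s\<bar> \<le> sqrt B * sqrt k2" for s
  proof -
    have "sqrt (ip h h) * sqrt (K s s) \<le> sqrt (ip h h) * sqrt k2"
      by (rule mult_left_mono[OF real_sqrt_le_mono[OF K_le]]) (simp add: pos[OF h])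
    then show ?thesis using evalbound[OF h, of s] unfolding B_def by linarith
  qed
  have D_int: "integrable \<mu> (\<lambda>s. F s s)"
  proof -
    have i1: "integrable \<mu> (\<lambda>s. a s * a s * K s s)"
    proof (rule Bochner_Integration.integrable_bound[where f="\<lambda>s. k2 * (a s * a s)"])
      show "integrable \<mu> (\<lambda>s. k2 * (a s * a s))" using aa_int by simp
      show "AE s in \<mu>. norm (a s * a s * K s s) \<le> norm (k2 * (a s * a s))"
      proof (rule AE_I2)
        fix s
        have "a s * a s * K s s \<le> a s * a s * k2" using K_le[of s] by (intro mult_left_mono) auto
        then show "norm (a s * a s * K s s) \<le> norm (k2 * (a s * a s))"
          using K_diag_nonneg[of s] k2_nonneg by (simp add: abs_mult ac_simps)
      qed
    qed measurable
    have i2: "integrable \<mu> (\<lambda>s. g s * g s)"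
    proof (rule Bochner_Integration.integrable_bound[where f="\<lambda>s. (B * k2) * (a s * a s)"])
      show "integrable \<mu> (\<lambda>s. (B * k2) * (a s * a s))" using aa_int by simp
      show "AE s in \<mu>. norm (g s * g s) \<le> norm ((B * k2) * (a s * a s))"
      proof (rule AE_I2)
        fix s
        have B0: "B \<ge> 0" unfolding B_def using pos[OF h] .
        have "\<bar>g s\<bar> \<le> \<bar>a s\<bar> * (sqrt B * sqrt k2)" unfolding g_eq abs_mult
          using hbound[of s] by (intro mult_left_mono) auto
        then have "\<bar>g s\<bar> * \<bar>g s\<bar> \<le> (\<bar>a s\<bar> * (sqrt B * sqrt k2)) * (\<bar>a s\<bar> * (sqrt B * sqrt k2))"
          by (intro mult_mono) auto
        also have "\<dots> = (B * k2) * (a s * a s)" using B0 k2_nonneg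
          by (simp add: algebra_simps abs_mult_self_eq)
        finally show "norm (g s * g s) \<le> norm ((B * k2) * (a s * a s))"
          using B0 k2_nonneg by (simp add: abs_mult)
      qed
    qed measurable
    have "integrable \<mu> (\<lambda>s. B * (a s * a s * K s s) - g s * g s)" using i1 i2 by auto
    then show ?thesis unfolding F_def .
  qed
  have F_sym: "F s t = F t s" for s t unfolding F_def using K_sym by (simp add: ac_simps)
  have F_psd: "0 \<le> (\<Sum>i<n. \<Sum>k<n. F (x i) (x k))" for n and x :: "nat \<Rightarrow> 'a"
  proof -
    define cc where "cc i = a (x i)" for i
    have "(\<Sum>i<n. \<Sum>k<n. F (x i) (x k))
       = B * (\<Sum>i<n. \<Sum>k<n. cc i * cc k * K (x i) (x k)) - (\<Sum>i<n. cc i * h (x i))^2"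
    proof -
      have "(\<Sum>i<n. \<Sum>k<n. F (x i) (x k))
        = B * (\<Sum>i<n. \<Sum>k<n. cc i * cc k * K (x i) (x k)) - (\<Sum>i<n. g (x i)) * (\<Sum>k<n. g (x k))"
      proof -
        have gg: "(\<Sum>i<n. \<Sum>k<n. g (x i) * g (x k)) = (\<Sum>i<n. g (x i)) * (\<Sum>k<n. g (x k))"
          by (simp add: sum_product)
        have bb: "(\<Sum>i<n. \<Sum>k<n. B * (a (x i) * a (x k) * K (x i) (x k)))
             = B * (\<Sum>i<n. \<Sum>k<n. cc i * cc k * K (x i) (x k))"
          by (simp add: sum_distrib_left cc_def)
        show ?thesis unfolding F_def sum_subtractf gg bb ..
      qed
      also have "(\<Sum>i<n. g (x i)) = (\<Sum>i<n. cc i * h (x i))" unfolding g_eq cc_def ..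
      finally show ?thesis by (simp add: power2_eq_square)
    qed
    moreover have "(\<Sum>i<n. cc i * h (x i))^2 \<le> B * (\<Sum>i<n. \<Sum>k<n. cc i * cc k * K (x i) (x k))"
      unfolding B_def by (rule psd_form[OF h])
    ultimately show ?thesis by simp
  qed
  have "0 \<le> (LINT s|\<mu>. LINT t|\<mu>. F s t)"
    by (rule psd_integral[OF fin F_sym F_psd F_int A_int[unfolded A_def[abs_def]] D_int])
  then have "0 \<le> B * S - S * S" using A_integral unfolding A_def by simp
  moreover have "S \<ge> 0" unfolding S_def using lp_pos by (auto intro: sum_nonneg divide_nonneg_pos)
  moreover have "B \<ge> 0" unfolding B_def using pos[OF h] .
  ultimately have "S \<le> B"
    by (metis diff_ge_0_iff_ge dual_order.trans mult_le_cancel_right nle_le not_less mult_right_mono)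
  then show ?thesis using Seq unfolding B_def by simp
qed

end



definition Lrisk :: "('y \<Rightarrow> real \<Rightarrow> real) \<Rightarrow> ('a \<times> 'y) list \<Rightarrow> ('a \<Rightarrow> real) \<Rightarrow> real" where
  "Lrisk loss D f = (1 / real (length D)) * (\<Sum>i<length D. loss (snd (D ! i)) (f (fst (D ! i))))"

lemma reg_risk_L: "reg_risk loss \<psi> ip D f = Lrisk loss D f + \<psi> * ip f f"
  unfolding reg_risk_def Lrisk_def ..

lemma aux_lin: "(c::real) * P \<le> c * ((1-t)*A + t*B) \<Longrightarrow> c*P \<le> (1-t)*(c*A) + t*(c*B)"
  by (simp add: algebra_simps)

lemma Lrisk_convex:
  assumes conv: "\<And>y. convex_on UNIV (loss y)" and t: "0 \<le> t" "t \<le> 1"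
  shows "Lrisk loss D (\<lambda>x. (1 - t) * f x + t * g x) \<le> (1 - t) * Lrisk loss D f + t * Lrisk loss D g"
proof -
  have "(\<Sum>i<length D. loss (snd (D ! i)) ((1 - t) * f (fst (D ! i)) + t * g (fst (D ! i))))
     \<le> (\<Sum>i<length D. (1 - t) * loss (snd (D ! i)) (f (fst (D ! i))) + t * loss (snd (D ! i)) (g (fst (D ! i))))"
    using convex_onD[OF conv] t by (intro sum_mono) simp
  also have "\<dots> = (1 - t) * (\<Sum>i<length D. loss (snd (D ! i)) (f (fst (D ! i))))
        + t * (\<Sum>i<length D. loss (snd (D ! i)) (g (fst (D ! i))))"
    by (simp add: sum.distrib sum_distrib_left)
  finally have "(1 / real (length D)) * (\<Sum>i<length D. loss (snd (D ! i)) ((1 - t) * f (fst (D ! i)) + t * g (fst (D ! i))))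
     \<le> (1 / real (length D)) * ((1 - t) * (\<Sum>i<length D. loss (snd (D ! i)) (f (fst (D ! i))))
        + t * (\<Sum>i<length D. loss (snd (D ! i)) (g (fst (D ! i)))))"
    by (intro mult_left_mono) auto
  then show ?thesis unfolding Lrisk_def by (rule aux_lin)
qed

context rk
begin

lemma strong:
  assumes conv: "\<And>y. convex_on UNIV (loss y)" and psi: "\<psi> > 0"
    and mini: "is_minimizer loss \<psi> H ip D f" and g: "g \<in> H"
  shows "reg_risk loss \<psi> ip D g - reg_risk loss \<psi> ip D f \<ge> \<psi> * ip (\<lambda>x. g x - f x) (\<lambda>x. g x - f x)"
proof -
  have f: "f \<in> H" using mini unfolding is_minimizer_def by blast
  have minf: "\<And>w. w \<in> H \<Longrightarrow> reg_risk loss \<psi> ip D f \<le> reg_risk loss \<psi> ip D w"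
    using mini unfolding is_minimizer_def by blast
  define X where "X = Lrisk loss D g - Lrisk loss D f"
  define a where "a = ip f f"
  define c where "c = ip f g"
  define d where "d = ip g g"
  define Y where "Y = X + 2 * \<psi> * (c - a)"
  define E where "E = a - 2 * c + d"
  have E_eq: "ip (\<lambda>x. g x - f x) (\<lambda>x. g x - f x) = E"
    using quad[OF g f, of 1 "-1"] sym[OF f g] unfolding E_def a_def c_def d_def by simp
  have E0: "E \<ge> 0" using pos[OF diff_in[OF g f]] E_eq by simp
  have key: "0 \<le> Y + t * \<psi> * E" if t: "0 < t" "t \<le> 1" for t
  proof -
    let ?ft = "\<lambda>x. (1 - t) * f x + t * g x"
    have ft: "?ft \<in> H" using lin[OF f g] .
    have "Lrisk loss D f + \<psi> * a \<le> Lrisk loss D ?ft + \<psi> * ip ?ft ?ft"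
      using minf[OF ft] unfolding reg_risk_L a_def .
    also have "\<dots> \<le> (1 - t) * Lrisk loss D f + t * Lrisk loss D g + \<psi> * ((1-t)^2 * a + 2*(1-t)*t*c + t^2 * d)"
      using Lrisk_convex[OF conv, where t=t and D=D and f=f and g=g] t quad[OF f g, of "1-t" t] unfolding a_def c_def d_def by simp
    finally have "0 \<le> t * Y + t^2 * (\<psi> * E)" unfolding Y_def E_def X_def
      by (simp add: algebra_simps power2_eq_square)
    then have "0 \<le> t * (Y + t * \<psi> * E)" by (simp add: algebra_simps power2_eq_square)
    then show ?thesis using t by (simp add: zero_le_mult_iff)
  qed
  have Y0: "Y \<ge> 0"
  proof (rule ccontr)
    assume "\<not> ?thesis"
    then have Yn: "Y < 0" by simp
    define t where "t = min 1 (- Y / (2 * (\<psi> * E + 1)))"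
    have pe: "\<psi> * E + 1 > 0" using psi E0 by (simp add: add_nonneg_pos)
    have "- Y / (2 * (\<psi> * E + 1)) > 0" using Yn pe by (intro divide_pos_pos) auto
    then have t0: "t > 0" unfolding t_def by simp
    have t1: "t \<le> 1" unfolding t_def by simp
    have "t * (\<psi> * E) \<le> t * (\<psi> * E + 1)" using t0 by simp
    also have "\<dots> \<le> (- Y / (2 * (\<psi> * E + 1))) * (\<psi> * E + 1)"
      using pe unfolding t_def by (intro mult_right_mono) auto
    also have "\<dots> = - Y / 2" using pe by (simp add: field_simps)
    finally have "t * \<psi> * E \<le> - Y / 2" by (simp add: mult.assoc)
    with key[OF t0 t1] Yn show False by simp
  qed
  have "reg_risk loss \<psi> ip D g - reg_risk loss \<psi> ip D f = Y + \<psi> * E"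
    unfolding reg_risk_L Y_def E_def X_def a_def d_def by (simp add: algebra_simps)
  then show ?thesis using Y0 E_eq by simp
qed

end



context merrk
begin

lemma norm1C_bound:
  assumes h: "h \<in> H" and tr: "summable (\<lambda>j. lam j powr (\<eta> - 1))"
  shows "norm_1C \<mu> lam \<phi> h \<le> ennreal (sqrt (ip h h) * sqrt (\<Sum>j. lam j powr (\<eta> - 1)))"
proof -
  define c where "c j = l2_coeff \<mu> \<phi> h j" for j
  define u where "u j = \<bar>c j\<bar> / sqrt (lam j powr \<eta>)" for j
  define v where "v j = sqrt (lam j powr (\<eta> - 1))" for j
  have uv: "\<bar>c j\<bar> / sqrt (lam j) = u j * v j" for j
  proof -
    have "lam j powr \<eta> = lam j powr (\<eta> - 1) * lam j"
      using powr_add[of "lam j" "\<eta> - 1" 1] lam_pos[of j] by simp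
    then have "sqrt (lam j powr \<eta>) = v j * sqrt (lam j)" unfolding v_def by (simp add: real_sqrt_mult)
    moreover have "v j > 0" unfolding v_def using lam_pos[of j] by simp
    ultimately show ?thesis unfolding u_def using lam_pos[of j] by (simp add: field_simps)
  qed
  have u2: "(u j)^2 = (c j)^2 / lam j powr \<eta>" for j
    unfolding u_def using lp_pos[of j] by (simp add: power_divide)
  have v2: "(v j)^2 = lam j powr (\<eta> - 1)" for j
    unfolding v_def using lam_pos[of j] by simp
  have part: "(\<Sum>j<N. \<bar>c j\<bar> / sqrt (lam j)) \<le> sqrt (ip h h) * sqrt (\<Sum>j. lam j powr (\<eta> - 1))" for N
  proof -
    have "(\<Sum>j<N. \<bar>c j\<bar> / sqrt (lam j))^2 = (\<Sum>j<N. u j * v j)^2" unfolding uv ..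
    also have "\<dots> \<le> (\<Sum>j<N. (u j)^2) * (\<Sum>j<N. (v j)^2)" by (rule Cauchy_Schwarz_ineq_sum)
    also have "\<dots> \<le> ip h h * (\<Sum>j. lam j powr (\<eta> - 1))"
    proof (rule mult_mono)
      show "(\<Sum>j<N. (u j)^2) \<le> ip h h" unfolding u2 c_def using bessel[OF h] .
      show "(\<Sum>j<N. (v j)^2) \<le> (\<Sum>j. lam j powr (\<eta> - 1))" unfolding v2
        by (rule sum_le_suminf[OF tr]) auto
      show "0 \<le> ip h h" using pos[OF h] .
      show "0 \<le> (\<Sum>j<N. (v j)^2)" by (auto intro: sum_nonneg)
    qed
    finally have "(\<Sum>j<N. \<bar>c j\<bar> / sqrt (lam j))^2 \<le> ip h h * (\<Sum>j. lam j powr (\<eta> - 1))" .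
    then have "(\<Sum>j<N. \<bar>c j\<bar> / sqrt (lam j)) \<le> sqrt (ip h h * (\<Sum>j. lam j powr (\<eta> - 1)))"
      by (rule real_le_rsqrt)
    then show ?thesis by (simp add: real_sqrt_mult)
  qed
  show ?thesis unfolding norm_1C_def
  proof (rule suminf_le_const[OF summableI])
    fix N
    have "(\<Sum>j<N. ennreal (\<bar>l2_coeff \<mu> \<phi> h j\<bar> / sqrt (lam j))) = ennreal (\<Sum>j<N. \<bar>c j\<bar> / sqrt (lam j))"
      unfolding c_def by (rule sum_ennreal) (use lam_pos in \<open>auto intro!: divide_nonneg_nonneg simp: less_imp_le\<close>)
    also have "\<dots> \<le> ennreal (sqrt (ip h h) * sqrt (\<Sum>j. lam j powr (\<eta> - 1)))"
      by (rule ennreal_leI[OF part])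
    finally show "(\<Sum>j<N. ennreal (\<bar>l2_coeff \<mu> \<phi> h j\<bar> / sqrt (lam j))) \<le> ennreal (sqrt (ip h h) * sqrt (\<Sum>j. lam j powr (\<eta> - 1)))" .
  qed
qed

end

theorem theorem9:
  fixes \<mu> :: "'a::metric_space measure"
    and C :: "'a \<Rightarrow> 'a \<Rightarrow> real"
    and lam :: "nat \<Rightarrow> real"
    and \<phi> :: "nat \<Rightarrow> 'a \<Rightarrow> real"
    and \<eta> \<psi> M :: real
    and H :: "('a \<Rightarrow> real) set"
    and ip :: "('a \<Rightarrow> real) \<Rightarrow> ('a \<Rightarrow> real) \<Rightarrow> real"
    and loss :: "'y \<Rightarrow> real \<Rightarrow> real"
  assumes compact_T: "compact (UNIV :: 'a set)"
    and borel_mu: "sets \<mu> = sets borel"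
    and finite_mu: "finite_measure \<mu>"
    and C_cont: "continuous_on UNIV (\<lambda>(s, t). C s t)"
    and C_sym: "\<And>s t. C s t = C t s"
    and C_psd: "psd_kernel C"
    and lam_pos: "\<And>j. lam j > 0"
    and lam_mono: "\<And>j. lam (Suc j) \<le> lam j"
    and phi_meas: "\<And>j. \<phi> j \<in> borel_measurable \<mu>"
    and phi_L2: "\<And>j. integrable \<mu> (\<lambda>x. (\<phi> j x)\<^sup>2)"
    and phi_orth: "\<And>i j. (LINT x|\<mu>. \<phi> i x * \<phi> j x) = (if i = j then 1 else 0)"
    and mercer: "\<And>s t. (\<lambda>j. lam j * \<phi> j s * \<phi> j t) sums C s t"
    and eta_gt: "\<eta> > 1"
    and trace_fin: "summable (\<lambda>j. lam j powr (\<eta> - 1))"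
    and kappa_fin: "bdd_above (range (\<lambda>x. kernel_pow lam \<phi> \<eta> x x))"
    and H_rkhs: "rkhs (kernel_pow lam \<phi> \<eta>) H ip"
    and loss_convex: "\<And>y. convex_on UNIV (loss y)"
    and loss_lip: "\<And>y. M-lipschitz_on UNIV (loss y)"
    and psi_pos: "\<psi> > 0"
  shows "\<forall>D D' fD fD'. adjacent D D' \<and> length D > 0 \<and>
            is_minimizer loss \<psi> H ip D fD \<and> is_minimizer loss \<psi> H ip D' fD' \<longrightarrow>
            norm_1C \<mu> lam \<phi> (\<lambda>x. fD x - fD' x)
              \<le> ennreal (M / (\<psi> * real (length D))
                   * sqrt (SUP x. kernel_pow lam \<phi> \<eta> x x)
                   * sqrt (\<Sum>j. lam j powr (\<eta> - 1)))"
proof (intro allI impI, elim conjE)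
  fix D D' :: "('a \<times> 'y) list" and fD fD'
  assume adj: "adjacent D D'" and n0: "length D > 0"
    and m1: "is_minimizer loss \<psi> H ip D fD" and m2: "is_minimizer loss \<psi> H ip D' fD'"
  have msum: "summable (\<lambda>j. lam j * (\<phi> j s)^2)" for s
    using sums_summable[OF mercer[of s s]] by (simp add: power2_eq_square mult.assoc)
  interpret merrk \<mu> lam \<phi> \<eta> H ip
    unfolding merrk_def mer_def rk_def
    using finite_mu lam_pos lam_mono phi_meas phi_L2 phi_orth msum eta_gt kappa_fin H_rkhs by blast
  define n where "n = length D"
  have lenD': "length D' = n" using adj unfolding adjacent_def n_def by simp
  have "card {i. i < n \<and> D ! i \<noteq> D' ! i} = 1" using adj unfolding adjacent_def n_def by blast
  then obtain k where kset: "{i. i < n \<and> D ! i \<noteq> D' ! i} = {k}" by (rule card_1_singletonE)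
  have kn: "k < n" using kset by blast
  have same: "D ! i = D' ! i" if "i < n" "i \<noteq> k" for i using kset that by blast
  have f: "fD \<in> H" using m1 unfolding is_minimizer_def by blast
  have g: "fD' \<in> H" using m2 unfolding is_minimizer_def by blast
  define E where "E = ip (\<lambda>x. fD' x - fD x) (\<lambda>x. fD' x - fD x)"
  have E2: "ip (\<lambda>x. fD x - fD' x) (\<lambda>x. fD x - fD' x) = E"
    using quad[OF f g, of 1 "-1"] quad[OF g f, of 1 "-1"] sym[OF f g] unfolding E_def by simp
  have E0: "E \<ge> 0" unfolding E_def using pos[OF diff_in[OF g f]] .
  have s1: "reg_risk loss \<psi> ip D fD' - reg_risk loss \<psi> ip D fD \<ge> \<psi> * E"
    unfolding E_def by (rule strong[OF loss_convex psi_pos m1 g])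
  have s2: "reg_risk loss \<psi> ip D' fD - reg_risk loss \<psi> ip D' fD' \<ge> \<psi> * E"
    using strong[OF loss_convex psi_pos m2 f] E2 by simp
  define xk where "xk = fst (D ! k)"
  define yk where "yk = snd (D ! k)"
  define xk' where "xk' = fst (D' ! k)"
  define yk' where "yk' = snd (D' ! k)"
  have rdiff: "reg_risk loss \<psi> ip D w - reg_risk loss \<psi> ip D' w
      = (1 / real n) * (loss yk (w xk) - loss yk' (w xk'))" for w
  proof -
    have "(\<Sum>i<n. loss (snd (D ! i)) (w (fst (D ! i)))) - (\<Sum>i<n. loss (snd (D' ! i)) (w (fst (D' ! i))))
        = (\<Sum>i<n. loss (snd (D ! i)) (w (fst (D ! i))) - loss (snd (D' ! i)) (w (fst (D' ! i))))"
      by (simp add: sum_subtractf)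
    also have "\<dots> = (\<Sum>i\<in>{k}. loss (snd (D ! i)) (w (fst (D ! i))) - loss (snd (D' ! i)) (w (fst (D' ! i))))"
      by (rule sum.mono_neutral_right) (use kn same in auto)
    finally have eq: "(\<Sum>i<n. loss (snd (D ! i)) (w (fst (D ! i)))) - (\<Sum>i<n. loss (snd (D' ! i)) (w (fst (D' ! i))))
        = loss yk (w xk) - loss yk' (w xk')" unfolding xk_def yk_def xk'_def yk'_def by simp
    have "reg_risk loss \<psi> ip D w - reg_risk loss \<psi> ip D' w = (1 / real n) *
       ((\<Sum>i<n. loss (snd (D ! i)) (w (fst (D ! i)))) - (\<Sum>i<n. loss (snd (D' ! i)) (w (fst (D' ! i)))))"
      unfolding reg_risk_def lenD' n_def[symmetric] by (simp add: algebra_simps)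
    then show ?thesis unfolding eq .
  qed
  have M0: "M \<ge> 0" using lipschitz_on_nonneg[OF loss_lip] .
  have lip: "loss y a - loss y b \<le> M * \<bar>a - b\<bar>" for y a b
    using lipschitz_onD[OF loss_lip, of a b y] by (simp add: dist_real_def)
  define \<kappa> where "\<kappa> = sqrt k2"
  have evb: "\<bar>fD' x - fD x\<bar> \<le> sqrt E * \<kappa>" for x
  proof -
    have "\<bar>fD' x - fD x\<bar> \<le> sqrt E * sqrt (K x x)"
      using evalbound[OF diff_in[OF g f], of x] unfolding E_def .
    also have "\<dots> \<le> sqrt E * \<kappa>" unfolding \<kappa>_def
      by (rule mult_left_mono[OF real_sqrt_le_mono[OF K_le]]) (simp add: E0)
    finally show ?thesis .
  qed
  have "2 * (\<psi> * E) \<le> (1 / real n) * ((loss yk (fD' xk) - loss yk (fD xk)) + (loss yk' (fD xk') - loss yk' (fD' xk')))"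
    using s1 s2 rdiff[of fD] rdiff[of fD'] by (simp add: algebra_simps)
  also have "\<dots> \<le> (1 / real n) * (M * \<bar>fD' xk - fD xk\<bar> + M * \<bar>fD xk' - fD' xk'\<bar>)"
    using lip[of yk "fD' xk" "fD xk"] lip[of yk' "fD xk'" "fD' xk'"] by (intro mult_left_mono add_mono) auto
  also have "\<dots> \<le> (1 / real n) * (M * (sqrt E * \<kappa>) + M * (sqrt E * \<kappa>))"
    using evb[of xk] evb[of xk'] M0 by (intro mult_left_mono add_mono) (auto simp: abs_minus_commute)
  finally have c2: "2 * (\<psi> * E) \<le> (1 / real n) * (M * (sqrt E * \<kappa>) + M * (sqrt E * \<kappa>))" .
  have "(1 / real n) * (M * (sqrt E * \<kappa>) + M * (sqrt E * \<kappa>)) = 2 * ((M / real n) * (sqrt E * \<kappa>))"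
    by (simp add: algebra_simps)
  with c2 have main: "\<psi> * E \<le> (M / real n) * (sqrt E * \<kappa>)" by linarith
  have npos: "real n > 0" using n0 unfolding n_def by simp
  have kap0: "\<kappa> \<ge> 0" unfolding \<kappa>_def using k2_nonneg by simp
  have sqE: "sqrt E \<le> M * \<kappa> / (\<psi> * real n)"
  proof (cases "E = 0")
    case True then show ?thesis using M0 kap0 psi_pos npos by simp
  next
    case False
    then have sp: "sqrt E > 0" using E0 by simp
    have "\<psi> * sqrt E * sqrt E \<le> (M / real n * \<kappa>) * sqrt E"
      using main E0 by (simp add: algebra_simps)
    then have "\<psi> * sqrt E \<le> M / real n * \<kappa>" by (rule mult_right_le_imp_le[OF _ sp])
    then show ?thesis using psi_pos npos by (simp add: field_simps)
  qed
  have "norm_1C \<mu> lam \<phi> (\<lambda>x. fD x - fD' x) \<le> ennreal (sqrt E * sqrt (\<Sum>j. lam j powr (\<eta> - 1)))"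
    using norm1C_bound[OF diff_in[OF f g] trace_fin] E2 by simp
  also have "\<dots> \<le> ennreal (M / (\<psi> * real (length D)) * sqrt (SUP x. kernel_pow lam \<phi> \<eta> x x)
                   * sqrt (\<Sum>j. lam j powr (\<eta> - 1)))"
  proof (rule ennreal_leI)
    have "sqrt E * sqrt (\<Sum>j. lam j powr (\<eta> - 1)) \<le> (M * \<kappa> / (\<psi> * real n)) * sqrt (\<Sum>j. lam j powr (\<eta> - 1))"
      by (rule mult_right_mono[OF sqE]) (simp add: suminf_nonneg[OF trace_fin])
    then show "sqrt E * sqrt (\<Sum>j. lam j powr (\<eta> - 1)) \<le> M / (\<psi> * real (length D)) * sqrt (SUP x. kernel_pow lam \<phi> \<eta> x x)
                   * sqrt (\<Sum>j. lam j powr (\<eta> - 1))"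
      unfolding \<kappa>_def k2_def n_def by (simp add: algebra_simps)
  qed
  finally show "norm_1C \<mu> lam \<phi> (\<lambda>x. fD x - fD' x)
              \<le> ennreal (M / (\<psi> * real (length D))
                   * sqrt (SUP x. kernel_pow lam \<phi> \<eta> x x)
                   * sqrt (\<Sum>j. lam j powr (\<eta> - 1)))" .
qed


end
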